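(* Let $p/q$ be an even rational parameter and $P=2p/(p+q)$. For every tile center $c$, the label assigned to $-c$ by the tile description is obtained from the label assigned to $c$ by swapping N with S and E with W. Equivalently, the tiling produced by $(\Xi_P,X_P)$ is invariant under reflection in the origin.
   Context: An even rational parameter is a rational $p/q\in(0,1)$, $p,q$ positive coprime integers, $pq$ even; $\omega=p+q$, $P=2p/\omega$. Tile centers are the points $(m+\frac12,n+\frac12)$, $m,n\in\mathbb Z$; each is the center of a unit square with edges N, S, E, W. Let $\Lambda_P\subset\mathbb R^3$ be the lattice generated by $(2,P,P),(0,2,0),(0,0,2)$, $X_P=\mathbb R^3/\Lambda_P$ with coordinates $(T,U_1,U_2)$ and fundamental domain $[-1,1]^3$, and $\Xi_P(x,y)=(2Px+2y,2Px,2Px+2Py)\bmod\Lambda_P$. Each fiber $\{T\}\times[-1,1]^2$ is partitioned: given $u_1\le u_2\le u_3$, the lines $U_1=u_i$, $U_2=u_i$ cut $[-1,1]^2$ into a $4\times4$ grid of rectangles indexed by (column $a$, row $b$), columns in increasing $U_1$, rows in increasing $U_2$. Special rectangles with single letters: for $T\in[-1,-1+P]$: $(u_1,u_2,u_3)=(T,1-P,2-P+T)$, W $(4,4)$, N $(1,3)$, E $(2,2)$, S $(3,1)$; for $T\in[-1+P,1-P]$: $(-1+P,T,1-P)$, N $(1,4)$, E $(3,3)$, W $(2,2)$, S $(4,1)$; for $T\in[1-P,1]$: $(-2+P+T,-1+P,T)$, N $(2,4)$, W $(3,3)$, S $(4,2)$, E $(1,1)$. A non-special rectangle gets the unordered pair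 of letters of the special rectangles in its column and in its row; special rectangles get the empty label. The label of a tile center $c$ is the label of the rectangle (in its fiber) whose interior contains the representative of $\Xi_P(c)$ in $[-1,1]^3$ (this is known to be well defined for even rational parameters); a label $\{X,Y\}$ is drawn as a segment joining the midpoints of edges $X$ and $Y$ of the unit square centered at $c$. *)

theory Defs
  imports Complex_Main
begin

datatype edge = N | S | E | W

fun swap_edge :: "edge \<Rightarrow> edge" where
  "swap_edge N = S" | "swap_edge S = N" | "swap_edge E = W" | "swap_edge W = E"

text \<open>Even rational parameter p/q in (0,1), written via positive coprime naturals.\<close>
definition even_rational_param :: "nat \<Rightarrow> nat \<Rightarrow> bool" where
  "even_rational_param p q \<longleftrightarrow> 0 < p \<and> p < q \<and> coprime p q \<and> even (p * q)"

definition param_P :: "nat \<Rightarrow> nat \<Rightarrow> real" where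
  "param_P p q = 2 * real p / real (p + q)"

definition tile_center :: "real \<Rightarrow> real \<Rightarrow> bool" where
  "tile_center x y \<longleftrightarrow> (\<exists>m n :: int. x = of_int m + 1/2 \<and> y = of_int n + 1/2)"

text \<open>Membership of (t,u1,u2) in the lattice generated by (2,P,P),(0,2,0),(0,0,2).\<close>
definition in_Lambda :: "real \<Rightarrow> real \<Rightarrow> real \<Rightarrow> real \<Rightarrow> bool" where
  "in_Lambda P t u1 u2 \<longleftrightarrow>
     (\<exists>a b c :: int. t = 2 * of_int a \<and> u1 = of_int a * P + 2 * of_int b
                     \<and> u2 = of_int a * P + 2 * of_int c)"

text \<open>The map Xi_P (before reduction modulo the lattice).\<close>
definition Xi :: "real \<Rightarrow> real \<Rightarrow> real \<Rightarrow> real \<times> real \<times> real" where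
  "Xi P x y = (2*P*x + 2*y, 2*P*x, 2*P*x + 2*P*y)"

definition fiber_case :: "real \<Rightarrow> real \<Rightarrow> nat \<Rightarrow> bool" where
  "fiber_case P T k \<longleftrightarrow>
     (k = 1 \<and> -1 \<le> T \<and> T \<le> -1 + P) \<or>
     (k = 2 \<and> -1 + P \<le> T \<and> T \<le> 1 - P) \<or>
     (k = 3 \<and> 1 - P \<le> T \<and> T \<le> 1)"

text \<open>Grid boundaries: index 0 is -1, indices 1,2,3 are u1,u2,u3, index 4 is 1.\<close>
definition grid_bnd :: "real \<Rightarrow> real \<Rightarrow> nat \<Rightarrow> nat \<Rightarrow> real" where
  "grid_bnd P T k i =
     (if i = 0 then -1 else if i \<ge> 4 then 1 else
      if k = 1 then (if i = 1 then T else if i = 2 then 1 - P else 2 - P + T)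
      else if k = 2 then (if i = 1 then -1 + P else if i = 2 then T else 1 - P)
      else (if i = 1 then -2 + P + T else if i = 2 then -1 + P else T))"

text \<open>Special rectangles (column a, row b) with their single letters.\<close>
definition special :: "nat \<Rightarrow> nat \<Rightarrow> nat \<Rightarrow> edge option" where
  "special k a b =
     (if k = 1 then
        (if (a,b) = (4,4) then Some W else if (a,b) = (1,3) then Some N
         else if (a,b) = (2,2) then Some E else if (a,b) = (3,1) then Some S else None)
      else if k = 2 then
        (if (a,b) = (1,4) then Some N else if (a,b) = (3,3) then Some E
         else if (a,b) = (2,2) then Some W else if (a,b) = (4,1) then Some S else None)
      else
        (if (a,b) = (2,4) then Some N else if (a,b) = (3,3) then Some W
         else if (a,b) = (4,2) then Some S else if (a,b) = (1,1) then Some E else None))"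

definition rect_label :: "nat \<Rightarrow> nat \<Rightarrow> nat \<Rightarrow> edge set" where
  "rect_label k a b =
     (if special k a b \<noteq> None then {}
      else {X. \<exists>b'\<in>{1..4}. special k a b' = Some X} \<union> {Y. \<exists>a'\<in>{1..4}. special k a' b = Some Y})"

definition in_rect_interior :: "real \<Rightarrow> real \<Rightarrow> nat \<Rightarrow> nat \<Rightarrow> nat \<Rightarrow> real \<Rightarrow> real \<Rightarrow> bool" where
  "in_rect_interior P T k a b U1 U2 \<longleftrightarrow>
     a \<in> {1..4} \<and> b \<in> {1..4} \<and>
     grid_bnd P T k (a - 1) < U1 \<and> U1 < grid_bnd P T k a \<and>
     grid_bnd P T k (b - 1) < U2 \<and> U2 < grid_bnd P T k b"

text \<open>The tile description: the point (x,y) carries label L if some representative of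
  Xi_P(x,y) in [-1,1]^3 lies in the interior of a rectangle (of its fiber) labelled L.\<close>
definition tile_label :: "real \<Rightarrow> real \<Rightarrow> real \<Rightarrow> edge set \<Rightarrow> bool" where
  "tile_label P x y L \<longleftrightarrow>
     (\<exists>T U1 U2. T \<in> {-1..1} \<and> U1 \<in> {-1..1} \<and> U2 \<in> {-1..1} \<and>
        (case Xi P x y of (t, v1, v2) \<Rightarrow> in_Lambda P (T - t) (U1 - v1) (U2 - v2)) \<and>
        (\<exists>k a b. fiber_case P T k \<and> in_rect_interior P T k a b U1 U2 \<and> L = rect_label k a b))"

end

theory Submission
  imports Defs
begin

lemma grid_neg:
  assumes "k \<in> {1,2,3}" "i \<le> 4"
  shows "grid_bnd P (-T) (4-k) (4-i) = - grid_bnd P T k i"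
proof -
  have "k = 1 \<or> k = 2 \<or> k = 3" using assms by auto
  moreover have "i = 0 \<or> i = 1 \<or> i = 2 \<or> i = 3 \<or> i = 4" using assms by auto
  ultimately show ?thesis unfolding grid_bnd_def by (elim disjE) simp_all
qed

lemma fiber_neg: "fiber_case P T k \<Longrightarrow> fiber_case P (-T) (4-k) \<and> k \<in> {1,2,3}"
  unfolding fiber_case_def by auto

lemma rect_neg:
  assumes "k \<in> {1,2,3}" "in_rect_interior P T k a b U1 U2"
  shows "in_rect_interior P (-T) (4-k) (5-a) (5-b) (-U1) (-U2)"
proof -
  have a: "a \<in> {1..4}" "b \<in> {1..4}" using assms(2) unfolding in_rect_interior_def by auto
  have e1: "5-a-1 = 4-a" "5-b-1 = 4-b" by simp_all
  have e2: "5-a = 4-(a-1)" "5-b = 4-(b-1)" using a by auto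
  have l: "a \<le> 4" "b \<le> 4" "a - 1 \<le> 4" "b - 1 \<le> 4" using a by auto
  have g1: "grid_bnd P (-T) (4-k) (5-a-1) = - grid_bnd P T k a"
    unfolding e1 by (rule grid_neg[OF assms(1) l(1)])
  have g2: "grid_bnd P (-T) (4-k) (5-b-1) = - grid_bnd P T k b"
    unfolding e1 by (rule grid_neg[OF assms(1) l(2)])
  have g3: "grid_bnd P (-T) (4-k) (5-a) = - grid_bnd P T k (a-1)"
    unfolding e2 by (rule grid_neg[OF assms(1) l(3)])
  have g4: "grid_bnd P (-T) (4-k) (5-b) = - grid_bnd P T k (b-1)"
    unfolding e2 by (rule grid_neg[OF assms(1) l(4)])
  have i: "grid_bnd P T k (a - 1) < U1" "U1 < grid_bnd P T k a"
     "grid_bnd P T k (b - 1) < U2" "U2 < grid_bnd P T k b"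
    using assms(2) unfolding in_rect_interior_def by simp_all
  have ab5: "5 - a \<in> {1..4}" "5 - b \<in> {1..4}" using a by auto
  show ?thesis unfolding in_rect_interior_def g1 g2 g3 g4 using i ab5 by simp
qed

lemma special_neg:
  assumes "k \<in> {1,2,3}" "a \<in> {1..4}" "b \<in> {1..4}"
  shows "special (4-k) (5-a) (5-b) = map_option swap_edge (special k a b)"
proof -
  have "k = 1 \<or> k = 2 \<or> k = 3" using assms by auto
  moreover have "a = 1 \<or> a = 2 \<or> a = 3 \<or> a = 4" using assms by auto
  moreover have "b = 1 \<or> b = 2 \<or> b = 3 \<or> b = 4" using assms by auto
  ultimately show ?thesis unfolding special_def by (elim disjE) simp_all
qed

lemma swap_swap[simp]: "swap_edge (swap_edge e) = e"
  by (cases e) auto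

lemma ex14: "(\<exists>b\<in>{1..4::nat}. Q b) \<longleftrightarrow> Q 1 \<or> Q 2 \<or> Q 3 \<or> Q 4"
proof -
  have "{1..4::nat} = {1,2,3,4}" by auto
  then show ?thesis by auto
qed

lemma reidx: "(\<exists>b\<in>{1..4::nat}. Q b) \<longleftrightarrow> (\<exists>b\<in>{1..4::nat}. Q (5-b))"
  unfolding ex14 by auto

lemma img_col: "swap_edge ` {X. \<exists>b\<in>B. f b = Some X} = {X. \<exists>b\<in>B. map_option swap_edge (f b) = Some X}"
proof -
  have "\<And>X. (\<exists>b\<in>B. map_option swap_edge (f b) = Some X) \<longleftrightarrow> swap_edge X \<in> {X. \<exists>b\<in>B. f b = Some X}"
    by (auto, metis option.map(2) swap_swap)
  then show ?thesis by (auto simp: image_iff, metis swap_swap)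
qed

lemma rect_label_neg:
  assumes k: "k \<in> {1,2,3}" and "a \<in> {1..4}" "b \<in> {1..4}"
  shows "rect_label (4-k) (5-a) (5-b) = swap_edge ` rect_label k a b"
proof -
  have c: "{X. \<exists>b'\<in>{1..4}. special (4-k) (5-a) b' = Some X} = swap_edge ` {X. \<exists>b'\<in>{1..4}. special k a b' = Some X}"
    unfolding img_col
    apply (subst reidx)
    using special_neg[OF k assms(2)] by auto
  have r: "{X. \<exists>a'\<in>{1..4}. special (4-k) a' (5-b) = Some X} = swap_edge ` {X. \<exists>a'\<in>{1..4}. special k a' b = Some X}"
    unfolding img_col
    apply (subst reidx)
    using special_neg[OF k _ assms(3)] by auto
  have n: "special (4-k) (5-a) (5-b) = None \<longleftrightarrow> special k a b = None"
    using special_neg[OF assms] by simp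
  show ?thesis unfolding rect_label_def using c r n by (simp add: image_Un)
qed

lemma one_dir:
  assumes "tile_label P x y L"
  shows "tile_label P (-x) (-y) (swap_edge ` L)"
proof -
  obtain T U1 U2 k a b where h: "T \<in> {-1..1}" "U1 \<in> {-1..1}" "U2 \<in> {-1..1}"
    "case Xi P x y of (t, v1, v2) \<Rightarrow> in_Lambda P (T - t) (U1 - v1) (U2 - v2)"
    "fiber_case P T k" "in_rect_interior P T k a b U1 U2" "L = rect_label k a b"
    using assms unfolding tile_label_def by auto
  have k: "k \<in> {1,2,3}" using fiber_neg[OF h(5)] by auto
  have ab: "a \<in> {1..4}" "b \<in> {1..4}" using h(6) unfolding in_rect_interior_def by auto
  have lam: "case Xi P (-x) (-y) of (t, v1, v2) \<Rightarrow> in_Lambda P (-T - t) (-U1 - v1) (-U2 - v2)"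
  proof -
    from h(4) obtain i j l :: int where "T - (2*P*x + 2*y) = 2 * of_int i"
      "U1 - 2*P*x = of_int i * P + 2 * of_int j" "U2 - (2*P*x + 2*P*y) = of_int i * P + 2 * of_int l"
      unfolding Xi_def in_Lambda_def by auto
    then have "-T - (-(2*P*x + 2*y)) = 2 * of_int (-i) \<and>
      -U1 - (-(2*P*x)) = of_int (-i) * P + 2 * of_int (-j) \<and>
      -U2 - (-(2*P*x + 2*P*y)) = of_int (-i) * P + 2 * of_int (-l)"
      by (simp add: algebra_simps)
    then have ee: "-T - (-(2*P*x + 2*y)) = 2 * of_int (-i) \<and>
      -U1 - (-(2*P*x)) = of_int (-i) * P + 2 * of_int (-j) \<and>
      -U2 - (-(2*P*x + 2*P*y)) = of_int (-i) * P + 2 * of_int (-l)" .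
    have "in_Lambda P (-T - (-(2*P*x + 2*y))) (-U1 - (-(2*P*x))) (-U2 - (-(2*P*x + 2*P*y)))"
      unfolding in_Lambda_def
      apply (rule exI[of _ "-i"])
      apply (rule exI[of _ "-j"])
      apply (rule exI[of _ "-l"])
      by (fact ee)
    moreover have "Xi P (-x) (-y) = (-(2*P*x + 2*y), -(2*P*x), -(2*P*x + 2*P*y))"
      by (simp add: Xi_def)
    ultimately show ?thesis by (simp only: prod.case)
  qed
  have m: "-T \<in> {-1..1}" "-U1 \<in> {-1..1}" "-U2 \<in> {-1..1}" using h(1-3) by auto
  have r: "fiber_case P (-T) (4-k) \<and> in_rect_interior P (-T) (4-k) (5-a) (5-b) (-U1) (-U2)
     \<and> swap_edge ` L = rect_label (4-k) (5-a) (5-b)"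
    using fiber_neg[OF h(5)] rect_neg[OF k h(6)] rect_label_neg[OF k ab] h(7) by auto
  show ?thesis unfolding tile_label_def
    apply (rule exI[of _ "-T"])
    apply (rule exI[of _ "-U1"])
    apply (rule exI[of _ "-U2"])
    apply (intro conjI)
        apply (fact m(1))
       apply (fact m(2))
      apply (fact m(3))
     apply (fact lam)
    apply (rule exI[of _ "4-k"])
    apply (rule exI[of _ "5-a"])
    apply (rule exI[of _ "5-b"])
    by (fact r)
qed

theorem lemma3p4:
  fixes p q :: nat and x y :: real and L :: "edge set"
  assumes "even_rational_param p q"
    and "tile_center x y"
  shows "tile_label (param_P p q) (-x) (-y) (swap_edge ` L) \<longleftrightarrow> tile_label (param_P p q) x y L"
proof
  assume h: "tile_label (param_P p q) (-x) (-y) (swap_edge ` L)"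
  have ss: "swap_edge ` swap_edge ` L = L" by (simp add: image_image)
  from one_dir[OF h] show "tile_label (param_P p q) x y L"
    unfolding minus_minus ss .
next
  assume "tile_label (param_P p q) x y L"
  from one_dir[OF this] show "tile_label (param_P p q) (-x) (-y) (swap_edge ` L)" .
qed

end
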